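(* Let $\{B_j\}$ and $\{C_j\}$ be finite lists of operators on the fermionic Fock space on $n$ spin orbitals with the same cardinality, where each $B_j$ maps the $\eta$-electron subspace into the $\xi$-electron subspace and each $C_j$ is number-preserving. Then $$\max_{|\psi_\eta\rangle}\langle\psi_\eta|\sum_{j}B_j^\dagger C_j^\dagger C_jB_j|\psi_\eta\rangle\le\max_{|\psi_\eta\rangle}\langle\psi_\eta|\sum_{j}B_j^\dagger B_j|\psi_\eta\rangle\cdot\max_{k,\,|\phi_\xi\rangle}\langle\phi_\xi|C_k^\dagger C_k|\phi_\xi\rangle,$$ where $|\psi_\eta\rangle$ ranges over $\eta$-electron states and $|\phi_\xi\rangle$ over $\xi$-electron states. In terms of the fermionic seminorm, $$\Big\|\sum_{j}B_j^\dagger C_j^\dagger C_jB_j\Big\|_{\eta}\le\Big\|\sum_{j}B_j^\dagger B_j\Big\|_{\eta}\max_k\|C_k^\dagger C_k\|_{\xi}.$$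
   Context: Fermionic Fock space on $n$ spin orbitals: the $2^n$-dimensional Hilbert space with orthonormal basis $|c_0,\dots,c_{n-1}\rangle$, $c_j\in\{0,1\}$, with creation operators $A_j^\dagger|\dots,0_j,\dots\rangle=(-1)^{\sum_{k<j}c_k}|\dots,1_j,\dots\rangle$, $A_j^\dagger|\dots,1_j,\dots\rangle=0$, annihilation operators $A_j=(A_j^\dagger)^\dagger$, $N=\sum_jA_j^\dagger A_j$. An operator is number-preserving if it commutes with $N$. The $\eta$-electron subspace is the span of basis vectors with $\sum_jc_j=\eta$; $\eta$-electron states are unit vectors in it. For an operator $Y$, $\|Y\|_\eta=\max_{|\psi_\eta\rangle,|\phi_\eta\rangle}|\langle\phi_\eta|Y|\psi_\eta\rangle|$ over $\eta$-electron states. *)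

theory Defs
  imports "Jordan_Normal_Form.Matrix"
begin

text \<open>Fermionic Fock space on n spin orbitals: complex vectors of dimension 2^n.
  Basis index i (i < 2^n) encodes the occupation vector c_j = bit i j (j < n).
  Operators are 2^n x 2^n complex matrices.\<close>

definition fock_dim :: "nat \<Rightarrow> nat" where
  "fock_dim n = 2 ^ n"

definition occ_num :: "nat \<Rightarrow> nat \<Rightarrow> nat" where
  "occ_num n i = card {j. j < n \<and> bit i j}"

definition adj :: "complex mat \<Rightarrow> complex mat" where
  "adj A = mat (dim_col A) (dim_row A) (\<lambda>(i, j). cnj (A $$ (j, i)))"

definition creation :: "nat \<Rightarrow> nat \<Rightarrow> complex mat" where
  "creation n j = mat (fock_dim n) (fock_dim n)
     (\<lambda>(r, c). if \<not> bit c j \<and> r = c + 2 ^ j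
               then (-1) ^ card {k. k < j \<and> bit c k} else 0)"

definition annihilation :: "nat \<Rightarrow> nat \<Rightarrow> complex mat" where
  "annihilation n j = adj (creation n j)"

definition msum :: "nat \<Rightarrow> complex mat list \<Rightarrow> complex mat" where
  "msum d Ms = foldr (+) Ms (0\<^sub>m d d)"

definition number_op :: "nat \<Rightarrow> complex mat" where
  "number_op n = msum (fock_dim n) (map (\<lambda>j. creation n j * annihilation n j) [0..<n])"

definition number_preserving :: "nat \<Rightarrow> complex mat \<Rightarrow> bool" where
  "number_preserving n C \<longleftrightarrow> C \<in> carrier_mat (fock_dim n) (fock_dim n) \<and>
     C * number_op n = number_op n * C"

definition electron_subspace :: "nat \<Rightarrow> nat \<Rightarrow> complex vec set" where
  "electron_subspace n \<eta> = {v \<in> carrier_vec (fock_dim n).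
     \<forall>i < fock_dim n. v $ i \<noteq> 0 \<longrightarrow> occ_num n i = \<eta>}"

definition electron_states :: "nat \<Rightarrow> nat \<Rightarrow> complex vec set" where
  "electron_states n \<eta> = {v \<in> electron_subspace n \<eta>. v \<bullet>c v = 1}"

text \<open>Matrix element <phi|Y|psi> (inner product antilinear in the first slot).\<close>
definition braket :: "complex vec \<Rightarrow> complex mat \<Rightarrow> complex vec \<Rightarrow> complex" where
  "braket \<phi> Y \<psi> = (Y *\<^sub>v \<psi>) \<bullet>c \<phi>"

definition fermi_norm :: "nat \<Rightarrow> nat \<Rightarrow> complex mat \<Rightarrow> real" where
  "fermi_norm n \<eta> Y = Sup {cmod (braket \<phi> Y \<psi>) | \<phi> \<psi>.
      \<phi> \<in> electron_states n \<eta> \<and> \<psi> \<in> electron_states n \<eta>}"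

end

theory Submission
  imports Defs
begin

lemma cs_sum: assumes "y \<in> carrier_vec d"
  shows "x \<bullet>c y = (\<Sum>i<d. x $ i * cnj (y $ i))"
  using assms unfolding scalar_prod_def by (auto simp: atLeast0LessThan)

lemma adj_carrier[simp]: "A \<in> carrier_mat a b \<Longrightarrow> adj A \<in> carrier_mat b a"
  unfolding adj_def by auto

lemma adj_index[simp]: "A \<in> carrier_mat a b \<Longrightarrow> i < b \<Longrightarrow> k < a \<Longrightarrow> adj A $$ (i,k) = cnj (A $$ (k,i))"
  unfolding adj_def by auto

lemma mv_index: assumes "A \<in> carrier_mat d d" "x \<in> carrier_vec d" "i < d"
  shows "(A *\<^sub>v x) $ i = (\<Sum>k<d. A $$ (i,k) * x $ k)"
  using assms unfolding index_mult_mat_vec[OF assms(3)[folded carrier_matD(1)[OF assms(1)]]]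
  unfolding scalar_prod_def by (auto simp: atLeast0LessThan intro!: sum.cong)

lemma adj_cs: assumes A: "A \<in> carrier_mat d d" and x: "x \<in> carrier_vec d" and y: "y \<in> carrier_vec d"
  shows "(adj A *\<^sub>v x) \<bullet>c y = x \<bullet>c (A *\<^sub>v y)"
proof -
  have "(adj A *\<^sub>v x) \<bullet>c y = (\<Sum>i<d. (\<Sum>k<d. cnj (A $$ (k,i)) * x $ k) * cnj (y $ i))"
    using A x y by (simp add: cs_sum mv_index[of "adj A" d])
  also have "\<dots> = (\<Sum>i<d. \<Sum>k<d. x $ k * cnj (A $$ (k,i) * y $ i))"
    by (simp add: sum_distrib_right sum_distrib_left mult.assoc mult.left_commute)
  also have "\<dots> = (\<Sum>k<d. \<Sum>i<d. x $ k * cnj (A $$ (k,i) * y $ i))"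
    by (rule sum.swap)
  also have "\<dots> = x \<bullet>c (A *\<^sub>v y)"
  proof -
    have c: "A *\<^sub>v y \<in> carrier_vec d" using A y by simp
    show ?thesis unfolding cs_sum[OF c]
      by (rule sum.cong, simp, simp add: mv_index[OF A y] sum_distrib_left cnj_sum)
  qed
  finally show ?thesis .
qed

definition nsq :: "complex vec \<Rightarrow> real" where
  "nsq x = (\<Sum>i<dim_vec x. (cmod (x $ i))^2)"

lemma nsq_nonneg: "0 \<le> nsq x" unfolding nsq_def by (auto intro: sum_nonneg)

lemma cs_self: "x \<bullet>c x = complex_of_real (nsq x)"
  unfolding nsq_def scalar_prod_def
  by (auto simp: atLeast0LessThan of_real_sum complex_norm_square[symmetric] intro!: sum.cong)

lemma nsq_smult: "nsq (c \<cdot>\<^sub>v x) = (cmod c)^2 * nsq x"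
  unfolding nsq_def by (simp add: norm_mult power_mult_distrib sum_distrib_left)

lemma nsq_zero: assumes "x \<in> carrier_vec d" "nsq x = 0" shows "x = 0\<^sub>v d"
proof -
  have "\<forall>i\<in>{..<dim_vec x}. (cmod (x $ i))^2 = 0"
    using assms(2) unfolding nsq_def by (subst sum_nonneg_eq_0_iff[symmetric]) auto
  then show ?thesis using assms(1) by (intro eq_vecI) auto
qed

lemma cs_le: assumes x: "x \<in> carrier_vec d" and y: "y \<in> carrier_vec d"
  shows "cmod (x \<bullet>c y) \<le> (nsq x + nsq y) / 2"
proof -
  have "cmod (x \<bullet>c y) \<le> (\<Sum>i<d. cmod (x $ i * cnj (y $ i)))"
    unfolding cs_sum[OF y] by (rule norm_sum)
  also have "\<dots> \<le> (\<Sum>i<d. ((cmod (x $ i))^2 + (cmod (y $ i))^2) / 2)"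
  proof (rule sum_mono)
    fix i
    have "0 \<le> (cmod (x $ i) - cmod (y $ i))^2" by simp
    then show "cmod (x $ i * cnj (y $ i)) \<le> ((cmod (x $ i))^2 + (cmod (y $ i))^2) / 2"
      by (simp add: norm_mult power2_eq_square algebra_simps)
  qed
  also have "\<dots> = (nsq x + nsq y) / 2"
    using x y unfolding nsq_def by (simp add: sum.distrib sum_divide_distrib[symmetric])
  finally show ?thesis .
qed

lemma bk2: assumes "B \<in> carrier_mat d d" "\<phi> \<in> carrier_vec d" "\<psi> \<in> carrier_vec d"
  shows "braket \<phi> (adj B * B) \<psi> = (B *\<^sub>v \<psi>) \<bullet>c (B *\<^sub>v \<phi>)"
  unfolding braket_def using assms
  by (simp add: assoc_mult_mat_vec[of _ d d _ d] adj_cs[of B d])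

lemma bk4: assumes B: "B \<in> carrier_mat d d" and C: "C \<in> carrier_mat d d"
  and "\<phi> \<in> carrier_vec d" "\<psi> \<in> carrier_vec d"
  shows "braket \<phi> (adj B * adj C * C * B) \<psi> = (C *\<^sub>v (B *\<^sub>v \<psi>)) \<bullet>c (C *\<^sub>v (B *\<^sub>v \<phi>))"
proof -
  have "(adj B * adj C * C * B) *\<^sub>v \<psi> = adj B *\<^sub>v (adj C *\<^sub>v (C *\<^sub>v (B *\<^sub>v \<psi>)))"
  proof -
    have c1: "adj B * adj C \<in> carrier_mat d d" "adj B * adj C * C \<in> carrier_mat d d"
      using B C by (auto intro!: mult_carrier_mat adj_carrier)
    have "(adj B * adj C * C * B) *\<^sub>v \<psi> = (adj B * adj C * C) *\<^sub>v (B *\<^sub>v \<psi>)"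
      by (rule assoc_mult_mat_vec[OF c1(2) B]) (use assms in simp)
    also have "\<dots> = (adj B * adj C) *\<^sub>v (C *\<^sub>v (B *\<^sub>v \<psi>))"
      by (rule assoc_mult_mat_vec[OF c1(1) C]) (use assms in simp)
    also have "\<dots> = adj B *\<^sub>v (adj C *\<^sub>v (C *\<^sub>v (B *\<^sub>v \<psi>)))"
      by (rule assoc_mult_mat_vec[of _ d d _ d]) (use assms in simp_all)
    finally show ?thesis .
  qed
  moreover have cw: "C *\<^sub>v (B *\<^sub>v \<psi>) \<in> carrier_vec d" "B *\<^sub>v \<phi> \<in> carrier_vec d"
    using assms by auto
  moreover have "adj C *\<^sub>v (C *\<^sub>v (B *\<^sub>v \<psi>)) \<in> carrier_vec d"
    using adj_carrier[OF C] cw by auto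
  ultimately show ?thesis unfolding braket_def using assms
    by (simp add: adj_cs[OF B] adj_cs[OF adj_carrier[OF C, THEN adj_carrier, simplified]]
       adj_cs[OF C])
qed

lemma msum_carrier: "\<forall>M\<in>set Ms. M \<in> carrier_mat d d \<Longrightarrow> msum d Ms \<in> carrier_mat d d"
  by (induction Ms) (auto simp: msum_def)

lemma bk_msum: assumes "\<forall>M\<in>set Ms. M \<in> carrier_mat d d" "\<phi> \<in> carrier_vec d" "\<psi> \<in> carrier_vec d"
  shows "braket \<phi> (msum d Ms) \<psi> = (\<Sum>i<length Ms. braket \<phi> (Ms ! i) \<psi>)"
  using assms(1)
proof (induction Ms)
  case Nil
  have "0\<^sub>m d d *\<^sub>v \<psi> = 0\<^sub>v d" using assms by (intro eq_vecI) (auto simp: scalar_prod_def)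
  then show ?case using assms by (simp add: msum_def braket_def)
next
  case (Cons M Ms)
  have c: "msum d Ms \<in> carrier_mat d d" using Cons msum_carrier by auto
  have "braket \<phi> (msum d (M # Ms)) \<psi> = braket \<phi> M \<psi> + braket \<phi> (msum d Ms) \<psi>"
    unfolding braket_def using Cons.prems c assms
    apply (simp add: msum_def[symmetric])
    apply (subst msum_def, simp, subst msum_def[symmetric])
    apply (simp add: add_mult_distrib_mat_vec[of _ d d])
    by (rule add_scalar_prod_distrib[of _ d]) auto
  also have "\<dots> = (\<Sum>i<length (M # Ms). braket \<phi> ((M # Ms) ! i) \<psi>)"
    using Cons by (simp del: sum.lessThan_Suc add: sum.lessThan_Suc_shift)
  finally show ?case .
qed

lemma bk_bound: assumes M: "M \<in> carrier_mat d d" and p: "\<phi> \<in> carrier_vec d" "\<psi> \<in> carrier_vec d"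
  and n: "nsq \<phi> = 1" "nsq \<psi> = 1"
  shows "cmod (braket \<phi> M \<psi>) \<le> (\<Sum>i<d. \<Sum>k<d. cmod (M $$ (i,k)))"
proof -
  have le1: "cmod (v $ i) \<le> 1" if "v \<in> carrier_vec d" "nsq v = 1" "i < d" for v i
  proof -
    have "(cmod (v $ i))^2 \<le> nsq v" unfolding nsq_def
      using that by (intro member_le_sum) auto
    then have "(cmod (v $ i))^2 \<le> 1^2" using that by simp
    then show ?thesis by (rule power2_le_imp_le) simp
  qed
  have "cmod (braket \<phi> M \<psi>) = cmod (\<Sum>i<d. (\<Sum>k<d. M $$ (i,k) * \<psi> $ k) * cnj (\<phi> $ i))"
    unfolding braket_def cs_sum[OF p(1)] using M p by (simp add: mv_index del: index_mult_mat_vec)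
  also have "\<dots> \<le> (\<Sum>i<d. cmod ((\<Sum>k<d. M $$ (i,k) * \<psi> $ k) * cnj (\<phi> $ i)))"
    by (rule norm_sum)
  also have "\<dots> \<le> (\<Sum>i<d. \<Sum>k<d. cmod (M $$ (i,k)))"
  proof (rule sum_mono)
    fix i assume i: "i \<in> {..<d}"
    have "cmod ((\<Sum>k<d. M $$ (i,k) * \<psi> $ k) * cnj (\<phi> $ i)) \<le> cmod (\<Sum>k<d. M $$ (i,k) * \<psi> $ k)"
      using le1[OF p(1) n(1)] i by (simp add: norm_mult mult_left_le)
    also have "\<dots> \<le> (\<Sum>k<d. cmod (M $$ (i,k) * \<psi> $ k))" by (rule norm_sum)
    also have "\<dots> \<le> (\<Sum>k<d. cmod (M $$ (i,k)))"
      using le1[OF p(2) n(2)] by (intro sum_mono) (simp add: norm_mult mult_left_le)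
    finally show "cmod ((\<Sum>k<d. M $$ (i,k) * \<psi> $ k) * cnj (\<phi> $ i)) \<le> (\<Sum>k<d. cmod (M $$ (i,k)))" .
  qed
  finally show ?thesis .
qed


lemma occ_mask: "k \<le> n \<Longrightarrow> occ_num n (2^k - 1) = k"
proof -
  assume k: "k \<le> n"
  have m: "(2::nat)^k - 1 = mask k" by (simp add: mask_eq_exp_minus_1)
  have "{j. j < n \<and> bit ((2::nat)^k - 1) j} = {..<k}" using k unfolding m
    by (auto simp: bit_mask_iff)
  then show ?thesis unfolding occ_num_def by simp
qed

lemma states_ne: assumes "k \<le> n" shows "\<exists>\<phi>. \<phi> \<in> electron_states n k"
proof -
  define d where "d = fock_dim n"
  define j where "j = (2::nat)^k - 1"
  have "(2::nat)^k \<le> 2^n" using assms by (simp add: power_increasing)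
  then have jd: "j < d" unfolding j_def d_def fock_dim_def
    by (metis diff_less le_trans less_one not_less pos2 zero_less_power leI less_le_trans)
  let ?e = "unit_vec d j :: complex vec"
  have "?e \<in> electron_subspace n k"
    unfolding electron_subspace_def using occ_mask[OF assms] by (auto simp: d_def j_def unit_vec_def split: if_splits)
  moreover have "nsq ?e = (\<Sum>i<d. if i = j then 1 else 0)"
    unfolding nsq_def by (intro sum.cong) (auto simp: unit_vec_def)
  then have "nsq ?e = 1" using jd by simp
  then have "?e \<bullet>c ?e = 1" by (metis cs_self of_real_1)
  ultimately show ?thesis unfolding electron_states_def by blast
qed

lemma states_D: assumes "\<phi> \<in> electron_states n k"
  shows "\<phi> \<in> carrier_vec (fock_dim n)" "nsq \<phi> = 1" "\<phi> \<in> electron_subspace n k"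
  using assms unfolding electron_states_def electron_subspace_def
  by (auto simp: cs_self)

lemma scale_bound:
  assumes C: "C \<in> carrier_mat (fock_dim n) (fock_dim n)" and x: "x \<in> electron_subspace n k"
    and lam: "\<forall>\<phi>\<in>electron_states n k. Re (braket \<phi> (adj C * C) \<phi>) \<le> lam"
  shows "nsq (C *\<^sub>v x) \<le> lam * nsq x"
proof -
  define d where "d = fock_dim n"
  have xc: "x \<in> carrier_vec d" using x unfolding electron_subspace_def d_def by auto
  show ?thesis
  proof (cases "nsq x = 0")
    case True
    then have "x = 0\<^sub>v d" using nsq_zero xc by blast
    moreover have "C *\<^sub>v 0\<^sub>v d = 0\<^sub>v d" using C by (intro eq_vecI) (auto simp: d_def scalar_prod_def)
    ultimately show ?thesis using True by (simp add: nsq_def)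
  next
    case False
    then have pos: "nsq x > 0" using nsq_nonneg[of x] by simp
    define s where "s = sqrt (nsq x)"
    have s: "s > 0" "s^2 = nsq x" using pos by (auto simp: s_def)
    define u where "u = complex_of_real (1/s) \<cdot>\<^sub>v x"
    have uc: "u \<in> carrier_vec d" using xc by (simp add: u_def)
    have "cmod (complex_of_real (1/s)) = 1/s" using s by (simp add: norm_divide)
    then have cs: "(cmod (complex_of_real (1/s)))^2 = 1 / nsq x" using s
      by (simp add: power_divide)
    have nu: "nsq u = 1" using pos unfolding u_def nsq_smult cs by simp
    have "u \<in> electron_subspace n k" using x s uc unfolding electron_subspace_def u_def d_def
      by auto
    then have us: "u \<in> electron_states n k" unfolding electron_states_def using nu cs_self[of u] by simp
    have Cu: "C *\<^sub>v u = complex_of_real (1/s) \<cdot>\<^sub>v (C *\<^sub>v x)" unfolding u_def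
      using C xc d_def mult_mat_vec by blast
    have "Re (braket u (adj C * C) u) = nsq (C *\<^sub>v u)"
      using bk2[of C d u u] C uc by (simp add: d_def cs_self)
    also have "\<dots> = nsq (C *\<^sub>v x) / nsq x" unfolding Cu nsq_smult cs by simp
    finally have "nsq (C *\<^sub>v x) / nsq x \<le> lam" using lam us by metis
    then show ?thesis using pos by (simp add: divide_le_eq mult.commute)
  qed
qed


theorem lemma3:
  fixes n \<eta> \<xi> :: nat and Bs Cs :: "complex mat list"
  assumes "\<eta> \<le> n" and "\<xi> \<le> n"
    and "length Bs = length Cs" and "Cs \<noteq> []"
    and "\<forall>B \<in> set Bs. B \<in> carrier_mat (fock_dim n) (fock_dim n) \<and>
           (\<forall>v \<in> electron_subspace n \<eta>. B *\<^sub>v v \<in> electron_subspace n \<xi>)"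
    and "\<forall>C \<in> set Cs. number_preserving n C"
  shows "Sup {Re (braket \<psi> (msum (fock_dim n)
                  (map (\<lambda>(B, C). adj B * adj C * C * B) (zip Bs Cs))) \<psi>)
              | \<psi>. \<psi> \<in> electron_states n \<eta>}
         \<le> Sup {Re (braket \<psi> (msum (fock_dim n) (map (\<lambda>B. adj B * B) Bs)) \<psi>)
              | \<psi>. \<psi> \<in> electron_states n \<eta>}
           * Sup {Re (braket \<phi> (adj C * C) \<phi>)
              | C \<phi>. C \<in> set Cs \<and> \<phi> \<in> electron_states n \<xi>}
       \<and> fermi_norm n \<eta> (msum (fock_dim n)
              (map (\<lambda>(B, C). adj B * adj C * C * B) (zip Bs Cs)))
         \<le> fermi_norm n \<eta> (msum (fock_dim n) (map (\<lambda>B. adj B * B) Bs))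
           * Max ((\<lambda>C. fermi_norm n \<xi> (adj C * C)) ` set Cs)"
proof -
  define d where "d = fock_dim n"
  define m where "m = length Bs"
  define Y where "Y = msum d (map (\<lambda>(B, C). adj B * adj C * C * B) (zip Bs Cs))"
  define Z where "Z = msum d (map (\<lambda>B. adj B * B) Bs)"
  have Bc: "Bs!i \<in> carrier_mat d d" if "i < m" for i
    using assms(5) that nth_mem unfolding m_def d_def by blast
  have Bm: "Bs!i *\<^sub>v v \<in> electron_subspace n \<xi>" if "i < m" "v \<in> electron_subspace n \<eta>" for i v
    using assms(5) that nth_mem unfolding m_def by blast
  have Cin: "Cs!i \<in> set Cs" if "i < m" for i using assms(3) that unfolding m_def by simp
  have Cc: "C \<in> carrier_mat d d" if "C \<in> set Cs" for C
    using assms(6) that unfolding number_preserving_def d_def by blast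
  have Cci: "Cs!i \<in> carrier_mat d d" if "i < m" for i using Cc Cin that by blast
  have lz: "length (zip Bs Cs) = m" using assms(3) m_def by simp
  have Ycs: "\<forall>M\<in>set (map (\<lambda>(B, C). adj B * adj C * C * B) (zip Bs Cs)). M \<in> carrier_mat d d"
  proof
    fix M assume "M \<in> set (map (\<lambda>(B, C). adj B * adj C * C * B) (zip Bs Cs))"
    then obtain i where i: "i < m" "M = adj (Bs!i) * adj (Cs!i) * Cs!i * Bs!i"
      using lz by (auto simp: in_set_conv_nth)
    show "M \<in> carrier_mat d d" unfolding i(2) using Bc[OF i(1)] Cci[OF i(1)]
      by (auto intro!: mult_carrier_mat adj_carrier)
  qed
  have Zcs: "\<forall>M\<in>set (map (\<lambda>B. adj B * B) Bs). M \<in> carrier_mat d d"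
  proof
    fix M assume "M \<in> set (map (\<lambda>B. adj B * B) Bs)"
    then obtain i where i: "i < m" "M = adj (Bs!i) * Bs!i"
      unfolding m_def by (auto simp: in_set_conv_nth)
    show "M \<in> carrier_mat d d" unfolding i(2) using Bc[OF i(1)]
      by (auto intro!: mult_carrier_mat adj_carrier)
  qed
  have Yc: "Y \<in> carrier_mat d d" unfolding Y_def using Ycs by (rule msum_carrier)
  have Zc: "Z \<in> carrier_mat d d" unfolding Z_def using Zcs by (rule msum_carrier)
  have Ybr: "braket \<phi> Y \<psi> = (\<Sum>i<m. (Cs!i *\<^sub>v (Bs!i *\<^sub>v \<psi>)) \<bullet>c (Cs!i *\<^sub>v (Bs!i *\<^sub>v \<phi>)))"
    if "\<phi> \<in> carrier_vec d" "\<psi> \<in> carrier_vec d" for \<phi> \<psi>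
    unfolding Y_def bk_msum[OF Ycs that] length_map lz
  proof (intro sum.cong refl)
    fix i assume "i \<in> {..<m}"
    then have i: "i < m" by simp
    then show "braket \<phi> (map (\<lambda>(B, C). adj B * adj C * C * B) (zip Bs Cs) ! i) \<psi> =
      (Cs!i *\<^sub>v (Bs!i *\<^sub>v \<psi>)) \<bullet>c (Cs!i *\<^sub>v (Bs!i *\<^sub>v \<phi>))"
      using bk4[OF Bc[OF i] Cci[OF i] that] lz by simp
  qed
  have Zbr: "braket \<phi> Z \<psi> = (\<Sum>i<m. (Bs!i *\<^sub>v \<psi>) \<bullet>c (Bs!i *\<^sub>v \<phi>))"
    if "\<phi> \<in> carrier_vec d" "\<psi> \<in> carrier_vec d" for \<phi> \<psi>
    unfolding Z_def bk_msum[OF Zcs that] length_map m_def[symmetric]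
  proof (intro sum.cong refl)
    fix i assume "i \<in> {..<m}"
    then have i: "i < m" by simp
    then show "braket \<phi> (map (\<lambda>B. adj B * B) Bs ! i) \<psi> = (Bs!i *\<^sub>v \<psi>) \<bullet>c (Bs!i *\<^sub>v \<phi>)"
      using bk2[OF Bc[OF i] that] m_def by simp
  qed
  have Yd: "Re (braket \<psi> Y \<psi>) = (\<Sum>i<m. nsq (Cs!i *\<^sub>v (Bs!i *\<^sub>v \<psi>)))"
    if "\<psi> \<in> carrier_vec d" for \<psi>
    unfolding Ybr[OF that that] by (simp add: cs_self)
  have Zd: "Re (braket \<psi> Z \<psi>) = (\<Sum>i<m. nsq (Bs!i *\<^sub>v \<psi>))"
    if "\<psi> \<in> carrier_vec d" for \<psi>
    unfolding Zbr[OF that that] by (simp add: cs_self)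
  define K where "K M = (\<Sum>i<d. \<Sum>k<d. cmod (M $$ (i,k)))" for M
  have Kb: "cmod (braket \<phi> M \<psi>) \<le> K M"
    if "M \<in> carrier_mat d d" "\<phi> \<in> electron_states n k" "\<psi> \<in> electron_states n k" for M k \<phi> \<psi>
    unfolding K_def using bk_bound[OF that(1)] states_D[OF that(2)] states_D[OF that(3)]
    unfolding d_def by blast
  have K0: "0 \<le> K M" for M unfolding K_def by (auto intro!: sum_nonneg)
  have fn_up: "cmod (braket \<phi> M \<psi>) \<le> fermi_norm n k M"
    if "M \<in> carrier_mat d d" "\<phi> \<in> electron_states n k" "\<psi> \<in> electron_states n k" for M k \<phi> \<psi>
    unfolding fermi_norm_def
    by (rule cSup_upper) (use that Kb in \<open>blast, auto intro!: bdd_aboveI[where M = "K M"]\<close>)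
  have Re_fn: "Re (braket \<phi> M \<phi>) \<le> fermi_norm n k M"
    if "M \<in> carrier_mat d d" "\<phi> \<in> electron_states n k" for M k \<phi>
    using fn_up[OF that that(2)] complex_Re_le_cmod order_trans by blast
  have fn_nn: "0 \<le> fermi_norm n k M" if "k \<le> n" "M \<in> carrier_mat d d" for M k
    using states_ne[OF that(1)] fn_up[OF that(2)] norm_ge_zero order_trans by metis
  obtain \<psi>0 where \<psi>0: "\<psi>0 \<in> electron_states n \<eta>" using states_ne[OF assms(1)] by blast
  obtain \<phi>0 where \<phi>0: "\<phi>0 \<in> electron_states n \<xi>" using states_ne[OF assms(2)] by blast
  obtain C0 where C0: "C0 \<in> set Cs" using assms(4) by (cases Cs) auto
  have ACc: "adj C * C \<in> carrier_mat d d" if "C \<in> set Cs" for C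
    using Cc[OF that] by (auto intro!: mult_carrier_mat adj_carrier)
  have Rnsq: "Re (braket \<phi> (adj C * C) \<phi>) = nsq (C *\<^sub>v \<phi>)"
    if "C \<in> set Cs" "\<phi> \<in> carrier_vec d" for C \<phi>
    using bk2[OF Cc[OF that(1)] that(2) that(2)] by (simp add: cs_self)

  define S1 where "S1 = {Re (braket \<psi> Y \<psi>) | \<psi>. \<psi> \<in> electron_states n \<eta>}"
  define S2 where "S2 = {Re (braket \<psi> Z \<psi>) | \<psi>. \<psi> \<in> electron_states n \<eta>}"
  define S3 where "S3 = {Re (braket \<phi> (adj C * C) \<phi>) | C \<phi>. C \<in> set Cs \<and> \<phi> \<in> electron_states n \<xi>}"
  have bdd2: "bdd_above S2" unfolding S2_def
    using Kb[OF Zc] complex_Re_le_cmod order_trans by (intro bdd_aboveI[where M = "K Z"]) blast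
  have bdd3: "bdd_above S3" unfolding S3_def
  proof (intro bdd_aboveI[where M = "\<Sum>C\<in>set Cs. K (adj C * C)"], clarify)
    fix C \<phi> assume h: "C \<in> set Cs" "\<phi> \<in> electron_states n \<xi>"
    have "Re (braket \<phi> (adj C * C) \<phi>) \<le> K (adj C * C)"
      using Kb[OF ACc[OF h(1)] h(2) h(2)] complex_Re_le_cmod order_trans by blast
    also have "\<dots> \<le> (\<Sum>C\<in>set Cs. K (adj C * C))"
      using h(1) K0 by (intro member_le_sum) auto
    finally show "Re (braket \<phi> (adj C * C) \<phi>) \<le> (\<Sum>C\<in>set Cs. K (adj C * C))" .
  qed
  define lam where "lam = Sup S3"
  have lam_up: "Re (braket \<phi> (adj C * C) \<phi>) \<le> lam" if "C \<in> set Cs" "\<phi> \<in> electron_states n \<xi>" for C \<phi>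
    unfolding lam_def using that by (intro cSup_upper[OF _ bdd3]) (auto simp: S3_def)
  have lam0: "0 \<le> lam"
    using lam_up[OF C0 \<phi>0] Rnsq[OF C0 states_D(1)[OF \<phi>0, folded d_def]] nsq_nonneg[of "C0 *\<^sub>v \<phi>0"] by linarith
  have P1: "Sup S1 \<le> Sup S2 * lam"
  proof (rule cSup_least)
    show "S1 \<noteq> {}" unfolding S1_def using \<psi>0 by blast
  next
    fix x assume "x \<in> S1"
    then obtain \<psi> where \<psi>: "\<psi> \<in> electron_states n \<eta>" "x = Re (braket \<psi> Y \<psi>)"
      unfolding S1_def by blast
    have \<psi>c: "\<psi> \<in> carrier_vec d" using states_D[OF \<psi>(1)] d_def by simp
    have "x = (\<Sum>i<m. nsq (Cs!i *\<^sub>v (Bs!i *\<^sub>v \<psi>)))" using \<psi> Yd[OF \<psi>c] by simp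
    also have "\<dots> \<le> (\<Sum>i<m. lam * nsq (Bs!i *\<^sub>v \<psi>))"
    proof (rule sum_mono)
      fix i assume i: "i \<in> {..<m}"
      show "nsq (Cs!i *\<^sub>v (Bs!i *\<^sub>v \<psi>)) \<le> lam * nsq (Bs!i *\<^sub>v \<psi>)"
        using i Cci[of i] Bm[of i \<psi>] states_D(3)[OF \<psi>(1)] lam_up[OF Cin[of i]] unfolding d_def
        by (intro scale_bound) auto
    qed
    also have "\<dots> = lam * Re (braket \<psi> Z \<psi>)" using Zd[OF \<psi>c] by (simp add: sum_distrib_left)
    also have "\<dots> \<le> lam * Sup S2"
      using \<psi>(1) lam0 by (intro mult_left_mono cSup_upper[OF _ bdd2]) (auto simp: S2_def)
    finally show "x \<le> Sup S2 * lam" by (simp add: mult.commute)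
  qed

  define F where "F = fermi_norm n \<eta> Z"
  define Mx where "Mx = Max ((\<lambda>C. fermi_norm n \<xi> (adj C * C)) ` set Cs)"
  have Mx_up: "fermi_norm n \<xi> (adj C * C) \<le> Mx" if "C \<in> set Cs" for C
    unfolding Mx_def using that by (intro Max_ge) auto
  have Mx0: "0 \<le> Mx" using Mx_up[OF C0] fn_nn[OF assms(2) ACc[OF C0]] by linarith
  have ZF: "Re (braket \<psi> Z \<psi>) \<le> F" if "\<psi> \<in> electron_states n \<eta>" for \<psi>
    unfolding F_def using Re_fn[OF Zc that] .
  have P2: "fermi_norm n \<eta> Y \<le> F * Mx"
    unfolding fermi_norm_def[of n \<eta> Y]
  proof (rule cSup_least)
    show "{cmod (braket \<phi> Y \<psi>) |\<phi> \<psi>. \<phi> \<in> electron_states n \<eta> \<and> \<psi> \<in> electron_states n \<eta>} \<noteq> {}"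
      using \<psi>0 by blast
  next
    fix x assume "x \<in> {cmod (braket \<phi> Y \<psi>) |\<phi> \<psi>. \<phi> \<in> electron_states n \<eta> \<and> \<psi> \<in> electron_states n \<eta>}"
    then obtain \<phi> \<psi> where st: "\<phi> \<in> electron_states n \<eta>" "\<psi> \<in> electron_states n \<eta>"
      and x: "x = cmod (braket \<phi> Y \<psi>)" by blast
    have \<psi>c: "\<psi> \<in> carrier_vec d" and \<phi>c: "\<phi> \<in> carrier_vec d"
      using states_D(1)[OF st(1)] states_D(1)[OF st(2)] d_def by auto
    have sc: "nsq (Cs!i *\<^sub>v v) \<le> Mx * nsq v" if "i < m" "v \<in> electron_subspace n \<xi>" for i v
    proof (rule scale_bound[OF Cci[OF that(1), unfolded d_def] that(2)], rule ballI)
      fix \<phi>' assume "\<phi>' \<in> electron_states n \<xi>"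
      then show "Re (braket \<phi>' (adj (Cs!i) * Cs!i) \<phi>') \<le> Mx"
        using Re_fn[OF ACc[OF Cin[OF that(1)]]] Mx_up[OF Cin[OF that(1)]] order_trans by blast
    qed
    have "x \<le> (\<Sum>i<m. cmod ((Cs!i *\<^sub>v (Bs!i *\<^sub>v \<psi>)) \<bullet>c (Cs!i *\<^sub>v (Bs!i *\<^sub>v \<phi>))))"
      unfolding x Ybr[OF \<phi>c \<psi>c] by (rule norm_sum)
    also have "\<dots> \<le> (\<Sum>i<m. (nsq (Cs!i *\<^sub>v (Bs!i *\<^sub>v \<psi>)) + nsq (Cs!i *\<^sub>v (Bs!i *\<^sub>v \<phi>))) / 2)"
      using \<psi>c \<phi>c by (intro sum_mono cs_le[of _ d]) (auto intro!: mult_mat_vec_carrier Bc Cci)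
    also have "\<dots> \<le> (\<Sum>i<m. (Mx * nsq (Bs!i *\<^sub>v \<psi>) + Mx * nsq (Bs!i *\<^sub>v \<phi>)) / 2)"
      using sc Bm states_D(3)[OF st(1)] states_D(3)[OF st(2)]
      by (intro sum_mono divide_right_mono add_mono) auto
    also have "\<dots> = Mx * (Re (braket \<psi> Z \<psi>) + Re (braket \<phi> Z \<phi>)) / 2"
      unfolding Zd[OF \<psi>c] Zd[OF \<phi>c]
      by (simp add: sum_distrib_left sum.distrib sum_divide_distrib[symmetric] algebra_simps)
    also have "\<dots> \<le> Mx * (F + F) / 2"
      using ZF[OF st(1)] ZF[OF st(2)] Mx0 by (intro divide_right_mono mult_left_mono add_mono) auto
    also have "\<dots> = F * Mx" by simp
    finally show "x \<le> F * Mx" .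
  qed
  show ?thesis using P1 P2
    unfolding S1_def S2_def S3_def lam_def F_def Mx_def Y_def Z_def d_def by blast
qed

end
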